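(* Let $G$ be a tree with $\ell$ leaves and let $1\leq m\leq \ell$. Then $\mathrm{capt}(G,m)\leq \lceil \mathrm{diam}(G)/2\rceil+(m-1)\,\mathrm{diam}(G)$.
   Context: All graphs are reflexive (a player may stay in place). The game of $k$ cops and $m$ robbers on $G$: in round 0 the cops first choose starting vertices, then the robbers choose theirs. In each round $i\geq 1$, all cops move (each to an adjacent vertex or staying), then all robbers move likewise. Several players may occupy the same vertex. Whenever a cop and some robbers occupy the same vertex, those robbers are captured and take no further part in the game. Both sides have full information. The cops win if all robbers are captured after finitely many rounds. For a cop-win graph $G$ (e.g. a tree), $\mathrm{capt}(G,m)$ is the index of the round in which the last robber is captured when one cop plays to minimize this index and $m$ robbers play to maximize it. $\mathrm{diam}(G)$ is the diameter of $G$. *)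

theory Defs
  imports Complex_Main
begin

text \<open>Simple graphs: vertex set V, symmetric irreflexive adjacency E on V.
  Reflexivity of the game graph is modelled by always allowing a player to stay.\<close>

definition graph :: "'a set \<Rightarrow> ('a \<Rightarrow> 'a \<Rightarrow> bool) \<Rightarrow> bool" where
  "graph V E \<longleftrightarrow> finite V \<and> V \<noteq> {} \<and>
     (\<forall>x y. E x y \<longrightarrow> x \<in> V \<and> y \<in> V) \<and>
     (\<forall>x y. E x y \<longrightarrow> E y x) \<and> (\<forall>x. \<not> E x x)"

definition is_walk :: "('a \<Rightarrow> 'a \<Rightarrow> bool) \<Rightarrow> 'a list \<Rightarrow> bool" where
  "is_walk E p \<longleftrightarrow> p \<noteq> [] \<and> (\<forall>i. Suc i < length p \<longrightarrow> E (p ! i) (p ! Suc i))"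

definition walk_len :: "('a \<Rightarrow> 'a \<Rightarrow> bool) \<Rightarrow> nat \<Rightarrow> 'a \<Rightarrow> 'a \<Rightarrow> bool" where
  "walk_len E k u v \<longleftrightarrow> (\<exists>p. is_walk E p \<and> length p = Suc k \<and> hd p = u \<and> last p = v)"

definition connected_graph :: "'a set \<Rightarrow> ('a \<Rightarrow> 'a \<Rightarrow> bool) \<Rightarrow> bool" where
  "connected_graph V E \<longleftrightarrow> (\<forall>u\<in>V. \<forall>v\<in>V. \<exists>k. walk_len E k u v)"

definition has_cycle :: "('a \<Rightarrow> 'a \<Rightarrow> bool) \<Rightarrow> bool" where
  "has_cycle E \<longleftrightarrow> (\<exists>p. is_walk E p \<and> length p \<ge> 3 \<and> distinct p \<and> E (last p) (hd p))"

definition is_tree :: "'a set \<Rightarrow> ('a \<Rightarrow> 'a \<Rightarrow> bool) \<Rightarrow> bool" where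
  "is_tree V E \<longleftrightarrow> graph V E \<and> connected_graph V E \<and> \<not> has_cycle E"

definition leaves :: "'a set \<Rightarrow> ('a \<Rightarrow> 'a \<Rightarrow> bool) \<Rightarrow> 'a set" where
  "leaves V E = {v \<in> V. card {w. E v w} = 1}"

definition gdist :: "('a \<Rightarrow> 'a \<Rightarrow> bool) \<Rightarrow> 'a \<Rightarrow> 'a \<Rightarrow> nat" where
  "gdist E u v = (LEAST k. walk_len E k u v)"

definition diam :: "'a set \<Rightarrow> ('a \<Rightarrow> 'a \<Rightarrow> bool) \<Rightarrow> nat" where
  "diam V E = Max {gdist E u v | u v. u \<in> V \<and> v \<in> V}"

text \<open>Game state: cop position and a list of robbers (None = captured).\<close>
definition capture :: "'a \<Rightarrow> 'a option list \<Rightarrow> 'a option list" where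
  "capture c R = map (\<lambda>r. if r = Some c then None else r) R"

definition robber_moves :: "('a \<Rightarrow> 'a \<Rightarrow> bool) \<Rightarrow> 'a option list \<Rightarrow> 'a option list \<Rightarrow> bool" where
  "robber_moves E R R' \<longleftrightarrow> list_all2 (\<lambda>r r'. case r of None \<Rightarrow> r' = None
        | Some v \<Rightarrow> (\<exists>w. r' = Some w \<and> (w = v \<or> E v w))) R R'"

text \<open>cop_wins E n c R: in the state after the robbers' move (captures applied), with the cop
  at c and robbers R, the cop can force all robbers to be captured within n further rounds.\<close>
fun cop_wins :: "('a \<Rightarrow> 'a \<Rightarrow> bool) \<Rightarrow> nat \<Rightarrow> 'a \<Rightarrow> 'a option list \<Rightarrow> bool" where
  "cop_wins E 0 c R = (\<forall>r\<in>set R. r = None)"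
| "cop_wins E (Suc n) c R = ((\<forall>r\<in>set R. r = None) \<or>
     (\<exists>c'. (c' = c \<or> E c c') \<and>
        (\<forall>R'. robber_moves E (capture c' R) R' \<longrightarrow> cop_wins E n c' (capture c' R'))))"

definition capt :: "'a set \<Rightarrow> ('a \<Rightarrow> 'a \<Rightarrow> bool) \<Rightarrow> nat \<Rightarrow> nat" where
  "capt V E m = (LEAST n. \<exists>c0\<in>V. \<forall>rs. length rs = m \<and> set rs \<subseteq> V \<longrightarrow>
                   cop_wins E n c0 (capture c0 (map Some rs)))"

end

theory Submission imports Defs begin

lemma is_walk_succ: "is_walk E p \<longleftrightarrow> p \<noteq> [] \<and> successively E p"
  by (simp add: is_walk_def successively_conv_nth)

locale T =
  fixes V :: "'a set" and E :: "'a \<Rightarrow> 'a \<Rightarrow> bool"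
  assumes tree: "is_tree V E"
begin

abbreviation d where "d \<equiv> gdist E"

lemma fin: "finite V" and ne: "V \<noteq> {}" and EV: "E x y \<Longrightarrow> x \<in> V \<and> y \<in> V"
  and Esym: "E x y \<Longrightarrow> E y x" and Eirr: "\<not> E x x"
  using tree by (auto simp: is_tree_def graph_def)

lemma conn: "u \<in> V \<Longrightarrow> v \<in> V \<Longrightarrow> \<exists>k. walk_len E k u v"
  using tree by (auto simp: is_tree_def connected_graph_def)

lemma nocyc: "\<not> has_cycle E"
  using tree by (auto simp: is_tree_def)

lemma d_walk: "u \<in> V \<Longrightarrow> v \<in> V \<Longrightarrow> walk_len E (d u v) u v"
  unfolding gdist_def using conn by (metis LeastI_ex)

lemma d_le: "walk_len E k u v \<Longrightarrow> d u v \<le> k"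
  unfolding gdist_def by (rule Least_le)

lemma d_refl[simp]: "d u u = 0"
proof -
  have "walk_len E 0 u u" unfolding walk_len_def by (rule exI[of _ "[u]"]) (simp add: is_walk_def)
  then show ?thesis using d_le by fastforce
qed

lemma d_zero: "u \<in> V \<Longrightarrow> v \<in> V \<Longrightarrow> d u v = 0 \<Longrightarrow> u = v"
  using d_walk[of u v] unfolding walk_len_def
  by (metis Suc_length_conv last_ConsL length_0_conv list.sel(1))

lemma succ_rev: "successively E xs \<Longrightarrow> successively E (rev xs)"
  by (simp add: successively_rev) (metis (mono_tags, lifting) Esym successively_mono)

lemma walk_sym: "walk_len E k u v \<Longrightarrow> walk_len E k v u"
  unfolding walk_len_def is_walk_succ
  by (metis Nil_is_rev_conv hd_rev last_rev length_rev succ_rev)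

lemma d_sym: "u \<in> V \<Longrightarrow> v \<in> V \<Longrightarrow> d u v = d v u"
  by (meson antisym d_le d_walk walk_sym)

lemma walk_cons: "E u u' \<Longrightarrow> walk_len E k u' v \<Longrightarrow> walk_len E (Suc k) u v"
  unfolding walk_len_def is_walk_succ
  apply clarify
  subgoal for p by (rule exI[of _ "u # p"]) (auto simp: successively_Cons)
  done

lemma d_nb: "E u u' \<Longrightarrow> v \<in> V \<Longrightarrow> d u v \<le> d u' v + 1"
  using walk_cons d_walk EV d_le by (metis Suc_eq_plus1)

lemma d_nb2: "E u u' \<Longrightarrow> v \<in> V \<Longrightarrow> d u' v \<le> d u v + 1"
  using d_nb Esym by blast

lemma d_nb3: "E u u' \<Longrightarrow> v \<in> V \<Longrightarrow> d v u \<le> d v u' + 1"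
  using d_nb EV d_sym by metis

lemma parent: "u \<in> V \<Longrightarrow> v \<in> V \<Longrightarrow> u \<noteq> v \<Longrightarrow> \<exists>p. E u p \<and> d p v + 1 = d u v"
proof -
  assume uv: "u \<in> V" "v \<in> V" "u \<noteq> v"
  obtain p where p: "is_walk E p" "length p = Suc (d u v)" "hd p = u" "last p = v"
    using d_walk[OF uv(1,2)] unfolding walk_len_def by blast
  have pos: "d u v \<ge> 1" using d_zero uv by fastforce
  then obtain a b q where pq: "p = a # b # q" using p(2)
    by (metis Suc_le_length_iff length_Suc_conv numeral_nat(7))
  have ab: "E a b" "successively E (b # q)" using p(1) pq by (auto simp: is_walk_succ)
  have "walk_len E (d u v - 1) b v" unfolding walk_len_def is_walk_succ
    apply (rule exI[of _ "b # q"]) using p pq ab by auto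
  then have "d b v \<le> d u v - 1" by (rule d_le)
  moreover have "d u v \<le> d b v + 1" using d_nb ab pq p uv by auto
  ultimately show ?thesis using ab pq p pos by (intro exI[of _ b]) auto
qed


lemma geo: assumes "u \<in> V" "v \<in> V"
  shows "\<exists>p. is_walk E p \<and> length p = Suc (d u v) \<and> hd p = u \<and> last p = v \<and> distinct p"
proof -
  obtain p where p: "is_walk E p" "length p = Suc (d u v)" "hd p = u" "last p = v"
    using d_walk[OF assms] unfolding walk_len_def by blast
  have "distinct p"
  proof (rule ccontr)
    assume "\<not> distinct p"
    then obtain xs y ys zs where pe: "p = xs@[y]@ys@[y]@zs" using not_distinct_decomp by blast
    let ?q = "xs@[y]@zs"
    have "successively E p" using p(1) by (simp add: is_walk_succ)
    then have "successively E ?q" unfolding pe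
      by (auto simp: successively_append_iff successively_Cons split: if_splits)
    moreover have "hd ?q = u" using p(3) pe by (cases xs) auto
    moreover have "last ?q = v" using p(4) pe by (cases zs) auto
    ultimately have "walk_len E (length ?q - 1) u v" unfolding walk_len_def is_walk_succ
      by (intro exI[of _ ?q]) auto
    then have "d u v \<le> length ?q - 1" by (rule d_le)
    then show False using p(2) pe by auto
  qed
  then show ?thesis using p by blast
qed

lemma suffix_d: assumes "is_walk E p" "j < length p"
  shows "d (p ! j) (last p) \<le> length p - 1 - j"
proof -
  have "walk_len E (length p - 1 - j) (p!j) (last p)" unfolding walk_len_def is_walk_succ
    apply (rule exI[of _ "drop j p"]) using assms
    by (auto simp: is_walk_succ hd_drop_conv_nth successively_conv_nth)
  then show ?thesis by (rule d_le)
qed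


lemma not_on_geo: assumes P: "is_walk E P" "length P = Suc (d x w)" "hd P = x" "last P = w"
  and yx: "E y x" and le: "d x w \<le> d y w"
  shows "y \<notin> set P"
proof
  assume "y \<in> set P"
  then obtain j where j: "j < length P" "P ! j = y" by (auto simp: in_set_conv_nth)
  show False
  proof (cases j)
    case 0 then show False using j P yx Eirr by (metis hd_conv_nth is_walk_def)
  next
    case (Suc j') then show False using suffix_d[OF P(1) j(1)] j P le by auto
  qed
qed

lemma succ_prefix: "successively E (xs @ ys) \<Longrightarrow> successively E xs"
  by (simp add: successively_append_iff)

lemma UP: assumes yx: "E y x" and yz: "E y z" and xz: "x \<noteq> z" and w: "w \<in> V"
  and lx: "d x w \<le> d y w" and lz: "d z w \<le> d y w"
  shows False
proof -
  have xV: "x \<in> V" "z \<in> V" using EV yx yz by auto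
  obtain P where P: "is_walk E P" "length P = Suc (d x w)" "hd P = x" "last P = w" "distinct P"
    using geo[OF xV(1) w] by blast
  obtain Q where Q: "is_walk E Q" "length Q = Suc (d z w)" "hd Q = z" "last Q = w" "distinct Q"
    using geo[OF xV(2) w] by blast
  have yP: "y \<notin> set P" using not_on_geo[OF P(1-4) yx lx] .
  have yQ: "y \<notin> set Q" using not_on_geo[OF Q(1-4) yz lz] .
  have "\<exists>a\<in>set P. a \<in> set Q" using P Q by (metis is_walk_def last_in_set)
  then obtain P1 v P2 where Pd: "P = P1 @ v # P2" "v \<in> set Q" "\<forall>a\<in>set P1. a \<notin> set Q"
    using split_list_first_prop[of P "\<lambda>a. a \<in> set Q"] by blast
  obtain Q1 Q2 where Qd: "Q = Q1 @ v # Q2" using Pd(2) split_list by metis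
  let ?c = "y # P1 @ v # rev Q1"
  have sP: "successively E (P1 @ [v])" using P(1) Pd(1)
    by (metis append.assoc append_Cons append_Nil is_walk_succ succ_prefix)
  have sQ: "successively E (Q1 @ [v])" using Q(1) Qd
    by (metis append.assoc append_Cons append_Nil is_walk_succ succ_prefix)
  then have sQ': "successively E (v # rev Q1)" using succ_rev by fastforce
  have hP: "hd (P1 @ [v]) = x" using P(3) Pd(1) by (cases P1) auto
  have s1: "successively E (P1 @ v # rev Q1)"
    using sP sQ' by (cases Q1 rule: rev_cases)
      (auto simp: successively_append_iff successively_Cons)
  have s2: "successively E ?c" using s1 hP yx
    by (cases P1) (auto simp: successively_Cons)
  have lc: "last ?c = z" using Q(3) Qd by (cases Q1) auto
  have dc: "distinct ?c" using P(5) Q(5) Pd Qd yP yQ by auto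
  have len: "length ?c \<ge> 3"
  proof (rule ccontr)
    assume "\<not> ?thesis"
    then have "P1 = []" "Q1 = []" by (auto simp: not_le)
    then show False using P(3) Q(3) Pd Qd xz by auto
  qed
  have "has_cycle E" unfolding has_cycle_def
    apply (rule exI[of _ ?c]) using s2 lc dc len yz Esym by (auto simp: is_walk_succ)
  then show False using nocyc by blast
qed


lemma nb_diff: assumes ab: "E a b" and w: "w \<in> V"
  shows "d b w = d a w + 1 \<or> d a w = d b w + 1"
proof -
  have V: "a \<in> V" "b \<in> V" using EV ab by auto
  have "d a w \<noteq> d b w"
  proof
    assume eq: "d a w = d b w"
    show False
    proof (cases "a = w")
      case True
      then have "b = w" using eq d_zero V w by (metis d_refl)
      then show False using True ab Eirr by auto
    next
      case False
      obtain p where p: "E a p" "d p w + 1 = d a w" using parent[OF V(1) w False] by blast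
      have "p \<noteq> b" using p eq by auto
      then show False using UP[OF p(1) ab _ w] p eq by auto
    qed
  qed
  then show ?thesis using d_nb[OF ab w] d_nb2[OF ab w] by auto
qed

lemma incr: assumes P: "is_walk E P" "distinct P" "length P = Suc n" and w: "w \<in> V"
  and i: "i < n" and st: "d (P ! Suc i) w = d (P ! i) w + 1"
  shows "d (P ! n) w = d (P ! i) w + (n - i)"
proof -
  have edge: "E (P!j) (P!Suc j)" if "j < n" for j
    using P that by (auto simp: is_walk_def)
  have "\<forall>j. i + j < n \<longrightarrow> d (P ! Suc (i+j)) w = d (P ! (i+j)) w + 1 \<and> d (P ! Suc (i+j)) w = d (P ! i) w + Suc j"
  proof (intro allI)
    fix j show "i + j < n \<longrightarrow> d (P ! Suc (i+j)) w = d (P ! (i+j)) w + 1 \<and> d (P ! Suc (i+j)) w = d (P ! i) w + Suc j"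
    proof (induction j)
      case 0 then show ?case using st by auto
    next
      case (Suc j)
      show ?case
      proof
        assume lt: "i + Suc j < n"
        then have ih: "d (P ! Suc (i+j)) w = d (P ! (i+j)) w + 1" "d (P ! Suc (i+j)) w = d (P ! i) w + Suc j"
          using Suc by auto
        let ?a = "P ! (i+j)" and ?b = "P ! Suc (i+j)" and ?c = "P ! Suc (Suc (i+j))"
        have e1: "E ?b ?a" using edge[of "i+j"] lt Esym by auto
        have e2: "E ?b ?c" using edge[of "Suc (i+j)"] lt by auto
        have ne: "?a \<noteq> ?c" using P(2,3) lt by (simp add: nth_eq_iff_index_eq)
        have "\<not> d ?c w \<le> d ?b w" using UP[OF e1 e2 ne w] ih by auto
        then have "d ?c w = d ?b w + 1" using nb_diff[OF e2 w] by auto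
        then show "d (P ! Suc (i + Suc j)) w = d (P ! (i + Suc j)) w + 1 \<and> d (P ! Suc (i + Suc j)) w = d (P ! i) w + Suc (Suc j)"
          using ih by auto
      qed
    qed
  qed
  from this[rule_format, of "n - Suc i"] i show ?thesis by auto
qed

definition D where "D = diam V E"

lemma finD: "finite {d u v | u v. u \<in> V \<and> v \<in> V}"
proof -
  have "{d u v | u v. u \<in> V \<and> v \<in> V} = (\<lambda>(u,v). d u v) ` (V \<times> V)" by auto
  then show ?thesis using fin by simp
qed

lemma d_le_D: "u \<in> V \<Longrightarrow> v \<in> V \<Longrightarrow> d u v \<le> D"
  unfolding D_def diam_def using finD by (intro Max_ge) auto

lemma D_att: "\<exists>u\<in>V. \<exists>v\<in>V. d u v = D"
proof -
  have "D \<in> {d u v | u v. u \<in> V \<and> v \<in> V}" unfolding D_def diam_def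
    using finD ne by (intro Max_in) auto
  then obtain u v where "D = d u v" "u \<in> V" "v \<in> V" by blast
  then show ?thesis by metis
qed

lemma center: "\<exists>c\<in>V. \<forall>w\<in>V. d c w \<le> (D + 1) div 2"
proof -
  obtain u v where uv: "u \<in> V" "v \<in> V" "d u v = D" using D_att by blast
  obtain P where P: "is_walk E P" "length P = Suc D" "hd P = u" "last P = v" "distinct P"
    using geo[OF uv(1,2)] uv(3) by auto
  define k where "k = (D + 1) div 2"
  have kD: "k \<le> D" unfolding k_def by auto
  have PV: "P ! j \<in> V" if "j \<le> D" for j
  proof (cases D)
    case 0 then show ?thesis using that P uv by (metis hd_conv_nth is_walk_def le_0_eq)
  next
    case (Suc D')
    show ?thesis
    proof (cases "j < D")
      case True then show ?thesis using P EV by (auto simp: is_walk_def)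
    next
      case False
      then have "j = D" using that by auto
      then show ?thesis using P uv by (metis diff_Suc_1 is_walk_def last_conv_nth)
    qed
  qed
  have P0: "P ! 0 = u" using P by (metis hd_conv_nth is_walk_def)
  have PD: "P ! D = v" using P by (metis diff_Suc_1 is_walk_def last_conv_nth)
  show ?thesis
  proof (intro bexI[of _ "P ! k"] ballI)
    show "P ! k \<in> V" using PV kD by auto
    fix w assume w: "w \<in> V"
    show "d (P ! k) w \<le> (D + 1) div 2"
    proof (cases "k = D")
      case True then show ?thesis using d_le_D[OF _ w] PV k_def by auto
    next
      case False
      then have kl: "k < D" using kD by auto
      have e: "E (P!k) (P!Suc k)" using P kl by (auto simp: is_walk_def)
      show ?thesis
      proof (cases "d (P ! Suc k) w = d (P ! k) w + 1")
        case True
        have "d (P ! D) w = d (P ! k) w + (D - k)" using incr[OF P(1,5,2) w kl True] .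
        moreover have "d (P ! D) w \<le> D" using d_le_D PV w by auto
        ultimately have "d (P ! k) w + (D - k) \<le> D" by simp
        then show ?thesis unfolding k_def[symmetric] using kl by linarith
      next
        case False
        then have st: "d (P ! k) w = d (P ! Suc k) w + 1" using nb_diff[OF e w] by auto
        let ?R = "rev P"
        have R: "is_walk E ?R" "distinct ?R" "length ?R = Suc D"
          using P succ_rev by (auto simp: is_walk_succ)
        have r1: "?R ! (D - Suc k) = P ! Suc k" using kl P by (simp add: rev_nth Suc_diff_Suc)
        have r2: "?R ! Suc (D - Suc k) = P ! k" using kl P by (simp add: rev_nth Suc_diff_Suc)
        have "d (?R ! D) w = d (?R ! (D - Suc k)) w + (D - (D - Suc k))"
          using incr[OF R w, of "D - Suc k"] kl st r1 r2 by auto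
        moreover have "?R ! D = P ! 0" using P by (simp add: rev_nth)
        moreover have "d (P ! 0) w \<le> D" using d_le_D PV w by auto
        ultimately show ?thesis using k_def kl r1 st by auto
      qed
    qed
  qed
qed


lemma branch: assumes cz: "E c z" and lt: "d z r < d c r" and rz: "r \<noteq> z" and rV: "r \<in> V"
  and rr: "r' = r \<or> E r r'"
  shows "d z r' < d c r'"
proof (cases "r' = r")
  case True then show ?thesis using lt by simp
next
  case False
  then have e: "E r r'" using rr by auto
  have V: "c \<in> V" "z \<in> V" "r' \<in> V" using cz e EV by auto
  show ?thesis
  proof (rule ccontr)
    assume "\<not> ?thesis"
    then have h: "d c r' \<le> d z r'" by simp
    obtain p where p: "E r p" "d p z + 1 = d r z" using parent[OF rV V(2) rz] by blast
    have pV: "p \<in> V" using p EV by auto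
    have s1: "d r z = d z r" "d r c = d c r" "d r' c = d c r'" "d r' z = d z r'"
      using d_sym V rV by auto
    have a1: "d p c \<le> d p z + 1" using d_nb3[OF cz pV] .
    have a2: "d z r' \<le> d z r + 1" using d_nb3[OF Esym[OF e] V(2)] .
    have a3: "d c r \<le> d c r' + 1" using d_nb3[OF e V(1)] .
    have ne: "r' \<noteq> p" using p s1 h a3 lt by auto
    show False using UP[OF e p(1) ne V(1)] s1 p a1 a2 h lt by auto
  qed
qed

end

definition alive :: "'a option list \<Rightarrow> nat" where
  "alive R = card {i. i < length R \<and> R ! i \<noteq> None}"

definition relN :: "'a option list \<Rightarrow> 'a option list \<Rightarrow> bool" where
  "relN R R' \<longleftrightarrow> length R' = length R \<and> (\<forall>i<length R. R ! i = None \<longrightarrow> R' ! i = None)"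

lemma alive_le: "relN R R' \<Longrightarrow> alive R' \<le> alive R"
  unfolding alive_def relN_def by (intro card_mono) auto

lemma alive_lt: assumes "relN R R'" "i < length R" "R ! i \<noteq> None" "R' ! i = None"
  shows "alive R' < alive R"
proof -
  have s: "{i. i < length R' \<and> R' ! i \<noteq> None} \<subseteq> {i. i < length R \<and> R ! i \<noteq> None}"
    using assms(1) unfolding relN_def by auto
  have "i \<in> {i. i < length R \<and> R ! i \<noteq> None}" "i \<notin> {i. i < length R' \<and> R' ! i \<noteq> None}"
    using assms by auto
  then have "{i. i < length R' \<and> R' ! i \<noteq> None} \<subset> {i. i < length R \<and> R ! i \<noteq> None}"
    using s by blast
  then show ?thesis unfolding alive_def by (intro psubset_card_mono) auto
qed

lemma alive_len: "alive R \<le> length R"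
proof -
  have "alive R \<le> card {..<length R}" unfolding alive_def by (intro card_mono) auto
  then show ?thesis by simp
qed

lemma cw_none: "\<forall>r\<in>set R. r = None \<Longrightarrow> cop_wins E n c R"
  by (cases n) auto

lemma cw_mono: "cop_wins E n c R \<Longrightarrow> n \<le> n' \<Longrightarrow> cop_wins E n' c R"
proof (induction n arbitrary: c R n')
  case 0 then show ?case using cw_none by auto
next
  case (Suc n)
  then obtain n'' where n': "n' = Suc n''" by (cases n') auto
  show ?case using Suc.prems Suc.IH n' by auto
qed

lemma capture_len[simp]: "length (capture c R) = length R"
  by (simp add: capture_def)

lemma capture_nth: "i < length R \<Longrightarrow> capture c R ! i = (if R ! i = Some c then None else R ! i)"
  by (simp add: capture_def)

lemma capture_notin: "Some c \<notin> set (capture c R)"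
  by (auto simp: capture_def)

lemma capture_set: "Some v \<in> set (capture c R) \<Longrightarrow> Some v \<in> set R"
  by (auto simp: capture_def split: if_splits)

lemma rm_len: "robber_moves E R R' \<Longrightarrow> length R' = length R"
  by (simp add: robber_moves_def list_all2_lengthD)

lemma rm_nth: "robber_moves E R R' \<Longrightarrow> i < length R \<Longrightarrow>
   (case R ! i of None \<Rightarrow> R' ! i = None | Some v \<Rightarrow> (\<exists>w. R' ! i = Some w \<and> (w = v \<or> E v w)))"
  unfolding robber_moves_def by (simp add: list_all2_conv_all_nth)

context T begin

definition inV :: "'a option list \<Rightarrow> bool" where
  "inV R \<longleftrightarrow> (\<forall>v. Some v \<in> set R \<longrightarrow> v \<in> V)"

lemma chase:
  assumes rest: "\<forall>c' R'. c' \<in> V \<longrightarrow> inV R' \<longrightarrow> Some c' \<notin> set R' \<longrightarrow> alive R' < a \<longrightarrow> cop_wins E k c' R'"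
  shows "c \<in> V \<Longrightarrow> inV R \<Longrightarrow> Some c \<notin> set R \<Longrightarrow> i < length R \<Longrightarrow> R ! i = Some r \<Longrightarrow> alive R \<le> a
    \<Longrightarrow> (\<forall>z w. E c z \<longrightarrow> d z r < d c r \<longrightarrow> w \<in> V \<longrightarrow> d z w < d c w \<longrightarrow> d c w \<le> h)
    \<Longrightarrow> cop_wins E (h + k) c R"
proof (induction h arbitrary: c R r)
  case 0
  have rV: "r \<in> V" using 0 by (metis inV_def nth_mem)
  have rc: "r \<noteq> c" using 0 by (metis nth_mem)
  obtain z where z: "E c z" "d z r + 1 = d c r" using parent[OF 0(1) rV] rc by metis
  have "d c r \<le> 0" using 0(7)[rule_format, OF z(1) _ rV] z by auto
  then show ?case using d_zero[OF 0(1) rV] rc by auto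
next
  case (Suc h)
  have rV: "r \<in> V" using Suc by (metis inV_def nth_mem)
  have rc: "r \<noteq> c" using Suc by (metis nth_mem)
  obtain z where z: "E c z" "d z r + 1 = d c r" using parent[OF Suc(2) rV] rc by metis
  have zV: "z \<in> V" using z EV by auto
  have "\<forall>R'. robber_moves E (capture z R) R' \<longrightarrow> cop_wins E (h + k) z (capture z R')"
  proof (intro allI impI)
    fix R' assume rm: "robber_moves E (capture z R) R'"
    let ?R2 = "capture z R'"
    have len: "length R' = length R" using rm_len[OF rm] by simp
    have rmn: "\<And>j. j < length R \<Longrightarrow> (case capture z R ! j of None \<Rightarrow> R' ! j = None
       | Some v \<Rightarrow> (\<exists>w. R' ! j = Some w \<and> (w = v \<or> E v w)))"
      using rm_nth[OF rm] by simp
    have rel: "relN R ?R2" unfolding relN_def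
    proof (intro conjI allI impI)
      show "length ?R2 = length R" using len by simp
      fix j assume j: "j < length R" "R ! j = None"
      then show "?R2 ! j = None" using rmn[OF j(1)] capture_nth[of j R z] capture_nth[of j R' z] len
        by auto
    qed
    have inV2: "inV ?R2" unfolding inV_def
    proof (intro allI impI)
      fix v assume "Some v \<in> set ?R2"
      then have "Some v \<in> set R'" by (rule capture_set)
      then obtain j where j: "j < length R" "R' ! j = Some v" using len by (metis in_set_conv_nth)
      show "v \<in> V"
      proof (cases "capture z R ! j")
        case None then show ?thesis using rmn[OF j(1)] j by auto
      next
        case (Some u)
        then have "Some u \<in> set R" using j capture_set by (metis capture_len nth_mem)
        then have "u \<in> V" using Suc(3) inV_def by auto
        then show ?thesis using rmn[OF j(1)] j Some EV by auto
      qed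
    qed
    have al: "alive ?R2 \<le> a" using alive_le[OF rel] Suc(7) by simp
    show "cop_wins E (h + k) z ?R2"
    proof (cases "?R2 ! i")
      case None
      have "alive ?R2 < alive R" using alive_lt[OF rel Suc(5)] Suc(6) None by auto
      then have "alive ?R2 < a" using Suc(7) by linarith
      then have "cop_wins E k z ?R2" using rest zV inV2 capture_notin[of z R'] by blast
      then show ?thesis using cw_mono by fastforce
    next
      case (Some r')
      have Ri: "R' ! i = Some r'" "r' \<noteq> z" using Some capture_nth[of i R' z] len Suc(5)
        by (auto split: if_splits)
      have rz: "r \<noteq> z" and rr: "r' = r \<or> E r r'"
        using rmn[OF Suc(5)] capture_nth[of i R z] Suc(5,6) Ri by (auto split: if_splits)
      have lt: "d z r < d c r" using z by auto
      have br: "d z r' < d c r'" using branch[OF z(1) lt rz rV rr] .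
      have H: "\<forall>z' w. E z z' \<longrightarrow> d z' r' < d z r' \<longrightarrow> w \<in> V \<longrightarrow> d z' w < d z w \<longrightarrow> d z w \<le> h"
      proof (intro allI impI)
        fix z' w assume a: "E z z'" "d z' r' < d z r'" "w \<in> V" "d z' w < d z w"
        have "z' \<noteq> c" using a(2) br by auto
        then have "\<not> d c w \<le> d z w" using UP[OF a(1) Esym[OF z(1)] _ a(3)] a(4) by auto
        then show "d z w \<le> h" using Suc(8) z(1) lt a(3) by fastforce
      qed
      show ?thesis
        using Suc.IH[OF zV inV2 capture_notin _ Some al H] Suc(5) len by simp
    qed
  qed
  then show ?case by (auto intro: exI[of _ z] simp: z(1))
qed

lemma rest: "c \<in> V \<Longrightarrow> inV R \<Longrightarrow> Some c \<notin> set R \<Longrightarrow> alive R \<le> j \<Longrightarrow> cop_wins E (j * D) c R"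
proof (induction j arbitrary: c R)
  case 0
  then have "\<forall>r\<in>set R. r = None" unfolding alive_def
    by (auto simp: in_set_conv_nth)
  then show ?case by (rule cw_none)
next
  case (Suc j)
  show ?case
  proof (cases "\<forall>r\<in>set R. r = None")
    case True then show ?thesis by (rule cw_none)
  next
    case False
    then obtain i r where ir: "i < length R" "R ! i = Some r" by (metis in_set_conv_nth not_None_eq)
    have "cop_wins E (D + j * D) c R"
      apply (rule chase[of "Suc j" "j * D", OF _ Suc(2,3,4) ir Suc(5)])
      using Suc.IH d_le_D Suc(2) by auto
    then show ?thesis by (simp add: add.commute)
  qed
qed


lemma capt_bound: assumes m: "1 \<le> m"
  shows "capt V E m \<le> (D + 1) div 2 + (m - 1) * D"
proof -
  obtain c0 where c0: "c0 \<in> V" "\<forall>w\<in>V. d c0 w \<le> (D + 1) div 2" using center by blast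
  have "\<forall>rs. length rs = m \<and> set rs \<subseteq> V \<longrightarrow>
          cop_wins E ((D + 1) div 2 + (m - 1) * D) c0 (capture c0 (map Some rs))"
  proof (intro allI impI)
    fix rs :: "'a list" assume rs: "length rs = m \<and> set rs \<subseteq> V"
    let ?R = "capture c0 (map Some rs)"
    have inR: "inV ?R" unfolding inV_def using rs capture_set by fastforce
    have al: "alive ?R \<le> m" using alive_len[of ?R] rs by simp
    show "cop_wins E ((D + 1) div 2 + (m - 1) * D) c0 ?R"
    proof (cases "\<forall>r\<in>set ?R. r = None")
      case True then show ?thesis by (rule cw_none)
    next
      case False
      then obtain i r where ir: "i < length ?R" "?R ! i = Some r" by (metis in_set_conv_nth not_None_eq)
      show ?thesis
        apply (rule chase[of m "(m - 1) * D", OF _ c0(1) inR capture_notin ir al])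
        using rest c0 m by auto
    qed
  qed
  then show ?thesis unfolding capt_def using c0(1) by (intro Least_le) blast
qed

end

lemma ceil_half: "\<lceil>real n / 2\<rceil> = int ((n + 1) div 2)"
proof (cases "even n")
  case True
  then obtain k where "n = 2 * k" by (auto elim: evenE)
  then show ?thesis by simp
next
  case False
  then obtain k where k: "n = 2 * k + 1" by (auto elim: oddE)
  have "real n / 2 = real k + 1/2" using k by (simp add: field_simps)
  then have "\<lceil>real n / 2\<rceil> = int k + 1" by (simp add: ceiling_eq_iff)
  then show ?thesis using k by simp
qed

theorem mainTheorem9:
  fixes V :: "'a set" and E :: "'a \<Rightarrow> 'a \<Rightarrow> bool" and m :: nat
  assumes "is_tree V E"
    and "1 \<le> m" and "m \<le> card (leaves V E)"
  shows "int (capt V E m) \<le> \<lceil>real (diam V E) / 2\<rceil> + (int m - 1) * int (diam V E)"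
proof -
  interpret T V E using assms(1) by unfold_locales
  have "capt V E m \<le> (D + 1) div 2 + (m - 1) * D" using capt_bound assms(2) .
  then have "int (capt V E m) \<le> int ((D + 1) div 2) + int (m - 1) * int D"
    by (metis of_nat_add of_nat_le_iff of_nat_mult)
  then show ?thesis using assms(2) unfolding ceil_half D_def by (simp add: of_nat_diff)
qed

end
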